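(* Run MUDAN on a reported profile $\theta'$ and suppose the final winner set $W$ is nonempty; let $w^*$ be the last buyer added to $W$. Then for every buyer $i\neq w^*$: $i$ belongs to the explored set $A$ at the moment $w^*$ is selected if and only if there is a directed path from $s$ to $i$ in $G_{\theta'}$ that does not pass through $w^*$ (i.e. $w^*$ is not critical for $i$).
   Context: Single-demand model. A seller $s$ has $m\ge 1$ identical items. Buyers $B=\{1,\dots,n\}$; buyer $i$ has a true valuation $v_i\in\mathbb{R}_{\ge0}$ and true neighbour set $r_i\subseteq B$; the seller has a fixed neighbour set $r_s\subseteq B$. Buyer $i$ reports $(v'_i,r'_i)$ with $v'_i\ge 0$, $r'_i\subseteq r_i$. The profile graph $G_{\theta'}$ of the global report $\theta'$ is the directed graph on $\{s\}\cup B$ with an edge $(x,y)$ iff $y\in r'_x$ (for $x=s$ use $r_s$). A buyer $w$ is critical for a buyer $i$ if every directed path from $s$ to $i$ in $G_{\theta'}$ passes through $w$. Priority rule: each buyer $i$ is given a priority $\sigma_i$ that is a function of its reported neighbour set $r'_i$ only (e.g. $\sigma_i=|r'_i|$), independent of all reported valuations and non-decreasing with respect to inclusion of $r'_i$; ties are broken by a fixed total order on buyers. MUDAN, run on a reported profile $\theta'$. It maintains an explored set $A\subseteq B$, a winner set $W\subseteq A$, remaining supply $m'=m-|W|$, and tentative payments. For current $A,W$ the potential-winner set $P(A,W)$ is: $P=A$ if $|A\setminus W|\le m'$; otherwise $P=W\cup\{$the $m'$ buyers of $A\setminus W$ with highest reported valuations$\}$ (ties broken by a fixed total order). Buyers in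 $A\setminus P$ are called exhausted. Initialise $A=r_s$, $W=\varnothing$, and repeat: (1) Closure: while some buyer $x\in W\cup(A\setminus P(A,W))$ (with $P$ recomputed from the current $A,W$) has $r'_x\not\subseteq A$, set $A\leftarrow A\cup r'_x$. (2) Let $P=P(A,W)$; if $P\setminus W=\varnothing$, stop. (3) Let $w$ be the buyer of $P\setminus W$ with highest priority; set its tentative payment $\hat p_w$ to the $(m'+1)$-th highest reported valuation in $A\setminus W$ (current $m'$, before adding $w$), or $0$ if $|A\setminus W|\le m'$; add $w$ to $W$. Output: every $w\in W$ gets an item and pays $\hat p_w$; other buyers get nothing and pay $0$. *)

theory Defs
  imports Complex_Main
begin

(* Buyers are elements of a linearly ordered type 'b; the linear order is the
   fixed total order used for tie-breaking (smaller buyer preferred).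
   The seller s is represented by None, buyer b by Some b in the profile graph.
   r :: 'b => 'b set gives the REPORTED neighbour sets r'_i, v the REPORTED valuations,
   rs the seller's neighbour set, sigma i X the priority of buyer i reporting X. *)

definition better :: "('b::linorder \<Rightarrow> real) \<Rightarrow> 'b \<Rightarrow> 'b \<Rightarrow> bool" where
  "better v y x \<longleftrightarrow> v y > v x \<or> (v y = v x \<and> y < x)"

definition top_k :: "('b::linorder \<Rightarrow> real) \<Rightarrow> nat \<Rightarrow> 'b set \<Rightarrow> 'b set" where
  "top_k v k S = {x \<in> S. card {y \<in> S. better v y x} < k}"

text \<open>Potential-winner set P(A,W); remaining supply is m - |W|.\<close>
definition potential :: "nat \<Rightarrow> ('b::linorder \<Rightarrow> real) \<Rightarrow> 'b set \<Rightarrow> 'b set \<Rightarrow> 'b set" where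
  "potential m v A W =
     (if card (A - W) \<le> m - card W then A
      else W \<union> top_k v (m - card W) (A - W))"

definition closed_state :: "nat \<Rightarrow> ('b::linorder \<Rightarrow> real) \<Rightarrow> ('b \<Rightarrow> 'b set) \<Rightarrow> 'b set \<Rightarrow> 'b set \<Rightarrow> bool" where
  "closed_state m v r A W \<longleftrightarrow> (\<forall>x \<in> W \<union> (A - potential m v A W). r x \<subseteq> A)"

definition selects :: "nat \<Rightarrow> ('b::linorder \<Rightarrow> real) \<Rightarrow> ('b \<Rightarrow> 'b set) \<Rightarrow> ('b \<Rightarrow> 'b set \<Rightarrow> real)
    \<Rightarrow> 'b set \<Rightarrow> 'b set \<Rightarrow> 'b \<Rightarrow> bool" where
  "selects m v r \<sigma> A W w \<longleftrightarrow>
     w \<in> potential m v A W - W \<and>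
     (\<forall>y \<in> potential m v A W - W. y \<noteq> w \<longrightarrow>
        \<sigma> y (r y) < \<sigma> w (r w) \<or> (\<sigma> y (r y) = \<sigma> w (r w) \<and> w < y))"

definition closure_step :: "nat \<Rightarrow> ('b::linorder \<Rightarrow> real) \<Rightarrow> ('b \<Rightarrow> 'b set)
    \<Rightarrow> 'b set \<times> 'b set \<Rightarrow> 'b set \<times> 'b set \<Rightarrow> bool" where
  "closure_step m v r st st' \<longleftrightarrow>
     (\<exists>x. x \<in> snd st \<union> (fst st - potential m v (fst st) (snd st)) \<and>
          \<not> r x \<subseteq> fst st \<and> st' = (fst st \<union> r x, snd st))"

definition select_step :: "nat \<Rightarrow> ('b::linorder \<Rightarrow> real) \<Rightarrow> ('b \<Rightarrow> 'b set) \<Rightarrow> ('b \<Rightarrow> 'b set \<Rightarrow> real)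
    \<Rightarrow> 'b set \<times> 'b set \<Rightarrow> 'b set \<times> 'b set \<Rightarrow> 'b \<Rightarrow> bool" where
  "select_step m v r \<sigma> st st' w \<longleftrightarrow>
     closed_state m v r (fst st) (snd st) \<and> selects m v r \<sigma> (fst st) (snd st) w \<and>
     st' = (fst st, insert w (snd st))"

definition mudan_step :: "nat \<Rightarrow> ('b::linorder \<Rightarrow> real) \<Rightarrow> ('b \<Rightarrow> 'b set) \<Rightarrow> ('b \<Rightarrow> 'b set \<Rightarrow> real)
    \<Rightarrow> 'b set \<times> 'b set \<Rightarrow> 'b set \<times> 'b set \<Rightarrow> bool" where
  "mudan_step m v r \<sigma> st st' \<longleftrightarrow> closure_step m v r st st' \<or> (\<exists>w. select_step m v r \<sigma> st st' w)"

definition terminal_state :: "nat \<Rightarrow> ('b::linorder \<Rightarrow> real) \<Rightarrow> ('b \<Rightarrow> 'b set) \<Rightarrow> 'b set \<times> 'b set \<Rightarrow> bool" where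
  "terminal_state m v r st \<longleftrightarrow>
     closed_state m v r (fst st) (snd st) \<and> potential m v (fst st) (snd st) - snd st = {}"

definition mudan_run :: "nat \<Rightarrow> ('b::linorder \<Rightarrow> real) \<Rightarrow> ('b \<Rightarrow> 'b set) \<Rightarrow> ('b \<Rightarrow> 'b set \<Rightarrow> real)
    \<Rightarrow> 'b set \<Rightarrow> ('b set \<times> 'b set) list \<Rightarrow> bool" where
  "mudan_run m v r \<sigma> rs ss \<longleftrightarrow>
     ss \<noteq> [] \<and> hd ss = (rs, {}) \<and>
     (\<forall>j. Suc j < length ss \<longrightarrow> mudan_step m v r \<sigma> (ss ! j) (ss ! Suc j)) \<and>
     terminal_state m v r (last ss)"

definition profile_edges :: "'b set \<Rightarrow> 'b set \<Rightarrow> ('b \<Rightarrow> 'b set) \<Rightarrow> ('b option \<times> 'b option) set" where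
  "profile_edges B rs r =
     {(None, Some y) | y. y \<in> rs} \<union> {(Some x, Some y) | x y. x \<in> B \<and> y \<in> r x}"

definition reach_avoiding :: "('b option \<times> 'b option) set \<Rightarrow> 'b \<Rightarrow> 'b \<Rightarrow> bool" where
  "reach_avoiding E w i \<longleftrightarrow>
     (None, Some i) \<in> {(a, b). (a, b) \<in> E \<and> a \<noteq> Some w \<and> b \<noteq> Some w}\<^sup>*"

end

theory Submission
  imports Defs
begin
lemma better_irrefl: "\<not> better v x x" by (auto simp: better_def)
lemma better_trans: "better v x y \<Longrightarrow> better v y z \<Longrightarrow> better v x z"
  by (auto simp: better_def)
lemma better_total: "x \<noteq> y \<Longrightarrow> better v x y \<or> better v y x"
  by (auto simp: better_def neq_iff)

lemma top_sub: "top_k v k S \<subseteq> S" by (auto simp: top_k_def)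

lemma top_exh:
  assumes "finite S" "w \<in> top_k v k S" "x \<in> S" "x \<notin> top_k v k S"
  shows "better v w x"
proof (rule ccontr)
  assume nb: "\<not> better v w x"
  have "w \<noteq> x" using assms by auto
  hence bxw: "better v x w" using nb better_total by blast
  have sub: "insert x {y\<in>S. better v y x} \<subseteq> {y\<in>S. better v y w}"
    using bxw assms(3) better_trans by blast
  have "x \<notin> {y\<in>S. better v y x}" using better_irrefl by blast
  hence c1: "card (insert x {y\<in>S. better v y x}) = Suc (card {y\<in>S. better v y x})"
    using assms(1) by simp
  have c2: "card {y\<in>S. better v y x} \<ge> k" using assms(3,4) by (auto simp: top_k_def)
  have c3: "card {y\<in>S. better v y w} < k" using assms(2) by (auto simp: top_k_def)
  have "card (insert x {y\<in>S. better v y x}) \<le> card {y\<in>S. better v y w}"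
    using sub assms(1) by (intro card_mono) auto
  thus False using c1 c2 c3 by simp
qed

lemma top_nonempty:
  assumes "finite S" "S \<noteq> {}" "0 < k"
  shows "top_k v k S \<noteq> {}"
proof -
  define M where "M = Max (v ` S)"
  define T where "T = {x\<in>S. v x = M}"
  have "M \<in> v ` S" unfolding M_def using assms by simp
  hence Tne: "T \<noteq> {}" unfolding T_def by auto
  have Tf: "finite T" unfolding T_def using assms by simp
  define x0 where "x0 = Min T"
  have x0T: "x0 \<in> T" unfolding x0_def using Tne Tf by simp
  have "{y\<in>S. better v y x0} = {}"
  proof (rule ccontr)
    assume "{y\<in>S. better v y x0} \<noteq> {}"
    then obtain y where y: "y \<in> S" "better v y x0" by auto
    have "v y \<le> M" unfolding M_def using y assms by simp
    hence "v y = v x0 \<and> y < x0" using y x0T by (auto simp: better_def T_def)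
    hence "y \<in> T" using x0T y by (auto simp: T_def)
    hence "x0 \<le> y" unfolding x0_def using Tf by simp
    thus False using \<open>v y = v x0 \<and> y < x0\<close> by (simp add: not_less[symmetric])
  qed
  hence c0: "card {y\<in>S. better v y x0} = 0" by (simp only: card.empty)
  have x0S: "x0 \<in> S" using x0T T_def by simp
  have "x0 \<in> top_k v k S" unfolding top_k_def
    by (rule CollectI, rule conjI, rule x0S, simp only: c0, rule assms(3))
  thus ?thesis by auto
qed

lemma top1_unique:
  assumes "finite S" "x \<in> top_k v 1 S" "y \<in> top_k v 1 S"
  shows "x = y"
proof (rule ccontr)
  assume "x \<noteq> y"
  hence "better v x y \<or> better v y x" by (rule better_total)
  moreover have "{z\<in>S. better v z x} = {}" "{z\<in>S. better v z y} = {}"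
    using assms by (auto simp: top_k_def finite_Collect_conjI)
  ultimately show False using assms by (auto simp: top_k_def)
qed

lemma potential_sub: "W \<subseteq> A \<Longrightarrow> potential m v A W \<subseteq> A"
  using top_sub[of v _ "A - W"] by (auto simp: potential_def)

lemma exh_facts:
  assumes "x \<in> A - potential m v A W"
  shows "x \<notin> W" "\<not> card (A - W) \<le> m - card W"
    "card {y\<in>A - W. better v y x} \<ge> m - card W"
  using assms by (auto simp: potential_def top_k_def split: if_splits)

lemma exh_closure:
  assumes "finite A'" "A \<subseteq> A'" "x \<in> A - potential m v A W"
  shows "x \<in> A' - potential m v A' W"
proof -
  note f = exh_facts[OF assms(3)]
  have "card (A - W) \<le> card (A' - W)" using assms by (intro card_mono) auto
  hence nc: "\<not> card (A' - W) \<le> m - card W" using f by simp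
  have "card {y\<in>A - W. better v y x} \<le> card {y\<in>A' - W. better v y x}"
    using assms by (intro card_mono) auto
  hence "card {y\<in>A' - W. better v y x} \<ge> m - card W" using f by simp
  thus ?thesis using nc f assms by (auto simp: potential_def top_k_def)
qed

lemma exh_select:
  assumes "finite A" "W \<subseteq> A" "w \<in> potential m v A W - W" "x \<in> A - potential m v A W"
  shows "x \<in> A - potential m v A (insert w W)"
proof -
  define k where "k = m - card W"
  note f = exh_facts[OF assms(4), folded k_def]
  have wt: "w \<in> top_k v k (A - W)" using assms(3) f(2) by (auto simp: potential_def k_def)
  have xt: "x \<notin> top_k v k (A - W)" using assms(4) f(2) by (auto simp: potential_def k_def)
  have k1: "k \<ge> 1" using wt by (auto simp: top_k_def)
  have fA: "finite (A - W)" using assms by simp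
  have bw: "better v w x" using top_exh[OF fA wt _ xt] assms(4) f(1) by auto
  have fW: "finite W" using assms(1,2) finite_subset by blast
  have wW: "w \<notin> W" using assms(3) by simp
  have cW: "card (insert w W) = Suc (card W)" using fW wW by simp
  have k': "m - card (insert w W) = k - 1" using cW k1 k_def by simp
  have AW: "A - insert w W = (A - W) - {w}" by auto
  have wAW: "w \<in> A - W" using wt top_sub by blast
  have cA: "card (A - insert w W) = card (A - W) - 1" using AW fA wAW by simp
  have nc: "\<not> card (A - insert w W) \<le> m - card (insert w W)" using cA k' f(2) k_def k1 by simp
  have xw: "x \<noteq> w" using assms(3,4) by auto
  have Seq: "{y\<in>A - insert w W. better v y x} = {y\<in>A - W. better v y x} - {w}" by auto
  have "card {y\<in>A - insert w W. better v y x} = card {y\<in>A - W. better v y x} - 1"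
    unfolding Seq using fA wAW bw by simp
  hence "card {y\<in>A - insert w W. better v y x} \<ge> k - 1" using f(3) by simp
  thus ?thesis using nc k' xw f(1) assms(4) by (auto simp: potential_def top_k_def)
qed

theorem lemma3:
  fixes B :: "'b::linorder set" and rs :: "'b set" and r :: "'b \<Rightarrow> 'b set"
    and v :: "'b \<Rightarrow> real" and m :: nat and \<sigma> :: "'b \<Rightarrow> 'b set \<Rightarrow> real"
    and ss :: "('b set \<times> 'b set) list" and j :: nat and wstar :: 'b
  assumes "finite B" and "rs \<subseteq> B" and "\<forall>i\<in>B. r i \<subseteq> B"
    and "m \<ge> 1" and "\<forall>i\<in>B. v i \<ge> 0"
    and "\<forall>i X Y. X \<subseteq> Y \<longrightarrow> \<sigma> i X \<le> \<sigma> i Y"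
    and run: "mudan_run m v r \<sigma> rs ss"
    and "Suc j < length ss"
    and sel: "select_step m v r \<sigma> (ss ! j) (ss ! Suc j) wstar"
    and last_sel: "\<forall>l w. j < l \<and> Suc l < length ss \<longrightarrow> \<not> select_step m v r \<sigma> (ss ! l) (ss ! Suc l) w"
  shows "\<forall>i\<in>B. i \<noteq> wstar \<longrightarrow>
           (i \<in> fst (ss ! j) \<longleftrightarrow> reach_avoiding (profile_edges B rs r) wstar i)"
proof -
  define A where "A k = fst (ss ! k)" for k
  define W where "W k = snd (ss ! k)" for k
  define P where "P k = potential m v (A k) (W k)" for k
  define E where "E = profile_edges B rs r"
  define E' where "E' = {(a, b). (a, b) \<in> E \<and> a \<noteq> Some wstar \<and> b \<noteq> Some wstar}"
  have reach_iff: "\<And>i. reach_avoiding (profile_edges B rs r) wstar i \<longleftrightarrow> (None, Some i) \<in> E'\<^sup>*"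
    unfolding reach_avoiding_def E'_def E_def by simp
  have ne: "ss \<noteq> []" and hd0: "ss ! 0 = (rs, {})" using run
    by (auto simp: mudan_run_def hd_conv_nth)
  have A0: "A 0 = rs" and W0: "W 0 = {}" using hd0 by (auto simp: A_def W_def)
  have steps: "\<And>k. Suc k < length ss \<Longrightarrow> mudan_step m v r \<sigma> (ss!k) (ss!Suc k)"
    using run by (simp add: mudan_run_def)
  have termF: "terminal_state m v r (last ss)" using run by (simp add: mudan_run_def)
  have step_cases: "\<And>k. Suc k < length ss \<Longrightarrow>
      (\<exists>x. x \<in> W k \<union> (A k - P k) \<and> A (Suc k) = A k \<union> r x \<and> W (Suc k) = W k) \<or>
      (\<exists>w. closed_state m v r (A k) (W k) \<and> selects m v r \<sigma> (A k) (W k) w \<and>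
           A (Suc k) = A k \<and> W (Suc k) = insert w (W k))"
  proof -
    fix k assume "Suc k < length ss"
    hence "mudan_step m v r \<sigma> (ss!k) (ss!Suc k)" by (rule steps)
    thus "?thesis k"
      unfolding mudan_step_def closure_step_def select_step_def A_def W_def P_def
      by (metis fst_conv snd_conv)
  qed
  have inv: "\<And>k. k < length ss \<Longrightarrow> A k \<subseteq> B \<and> W k \<subseteq> A k"
  proof -
    fix k assume "k < length ss" thus "A k \<subseteq> B \<and> W k \<subseteq> A k"
    proof (induction k)
      case 0 then show ?case using A0 W0 assms(2) by simp
    next
      case (Suc k)
      have sk: "k < length ss" using Suc.prems by simp
      have IH: "A k \<subseteq> B" "W k \<subseteq> A k" using Suc.IH[OF sk] by auto
      from step_cases[OF Suc.prems] show ?case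
      proof (elim disjE exE conjE)
        fix x assume x: "x \<in> W k \<union> (A k - P k)" "A (Suc k) = A k \<union> r x" "W (Suc k) = W k"
        have "x \<in> A k" using x(1) IH(2) by auto
        hence "x \<in> B" using IH(1) by auto
        hence "r x \<subseteq> B" using assms(3) by simp
        thus ?case unfolding x(2,3) using IH by auto
      next
        fix w assume w: "selects m v r \<sigma> (A k) (W k) w"
          "A (Suc k) = A k" "W (Suc k) = insert w (W k)" "closed_state m v r (A k) (W k)"
        have "w \<in> potential m v (A k) (W k)" using w(1) unfolding selects_def by simp
        hence "w \<in> A k" using potential_sub[OF IH(2), of m v] by auto
        thus ?case unfolding w(2,3) using IH by auto
      qed
    qed
  qed
  have fin: "\<And>k. k < length ss \<Longrightarrow> finite (A k)"
    using inv assms(1) by (meson finite_subset)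
  have step_mono: "\<And>k. Suc k < length ss \<Longrightarrow> A k \<subseteq> A (Suc k) \<and> W k \<subseteq> W (Suc k)"
  proof -
    fix k assume "Suc k < length ss"
    from step_cases[OF this] show "A k \<subseteq> A (Suc k) \<and> W k \<subseteq> W (Suc k)"
      by (elim disjE exE conjE) auto
  qed
  have mono: "\<And>k l. k \<le> l \<Longrightarrow> l < length ss \<Longrightarrow> A k \<subseteq> A l \<and> W k \<subseteq> W l"
  proof -
    fix k l assume "k \<le> l" "l < length ss" thus "A k \<subseteq> A l \<and> W k \<subseteq> W l"
    proof (induction l)
      case 0 thus ?case by simp
    next
      case (Suc l)
      show ?case
      proof (cases "k = Suc l")
        case True thus ?thesis by simp
      next
        case False
        hence "A k \<subseteq> A l \<and> W k \<subseteq> W l" using Suc by simp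
        thus ?thesis using step_mono[OF Suc.prems(2)] by blast
      qed
    qed
  qed
  have persist: "\<And>x k l. k \<le> l \<Longrightarrow> l < length ss \<Longrightarrow> x \<in> A k - P k \<Longrightarrow> x \<in> A l - P l"
  proof -
    fix x k l assume "k \<le> l" "l < length ss" "x \<in> A k - P k"
    thus "x \<in> A l - P l"
    proof (induction l)
      case 0 thus ?case by simp
    next
      case (Suc l)
      show ?case
      proof (cases "k = Suc l")
        case True thus ?thesis using Suc by simp
      next
        case False
        have kl: "k \<le> l" using False Suc.prems(1) by simp
        have ll: "l < length ss" using Suc.prems(2) by simp
        have IH: "x \<in> A l - potential m v (A l) (W l)"
          using Suc.IH[OF kl ll Suc.prems(3)] unfolding P_def by simp
        have fl: "finite (A l)" "W l \<subseteq> A l" using fin[OF ll] inv[OF ll] by auto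
        have fS: "finite (A (Suc l))" using fin[OF Suc.prems(2)] .
        from step_cases[OF Suc.prems(2)] show ?thesis
        proof (elim disjE exE conjE)
          fix y assume y: "y \<in> W l \<union> (A l - P l)" "A (Suc l) = A l \<union> r y" "W (Suc l) = W l"
          have "x \<in> A (Suc l) - potential m v (A (Suc l)) (W l)"
            by (rule exh_closure[OF fS _ IH]) (simp add: y(2))
          thus ?thesis unfolding P_def y(3) .
        next
          fix w assume w: "closed_state m v r (A l) (W l)" "selects m v r \<sigma> (A l) (W l) w"
            "A (Suc l) = A l" "W (Suc l) = insert w (W l)"
          have wP: "w \<in> potential m v (A l) (W l) - W l" using w(2) unfolding selects_def by simp
          have "x \<in> A l - potential m v (A l) (insert w (W l))"
            by (rule exh_select[OF fl wP IH])
          thus ?thesis unfolding P_def w(3,4) .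
        qed
      qed
    qed
  qed
  have jl: "j < length ss" using assms(8) by simp
  from sel have selj: "closed_state m v r (A j) (W j)" "selects m v r \<sigma> (A j) (W j) wstar"
    "A (Suc j) = A j" "W (Suc j) = insert wstar (W j)"
    by (auto simp: select_step_def A_def W_def)
  have ws: "wstar \<in> P j - W j" using selj(2) by (simp add: selects_def P_def)
  have not_exh: "\<And>k. k \<le> j \<Longrightarrow> wstar \<notin> A k - P k"
  proof -
    fix k assume kj: "k \<le> j"
    show "wstar \<notin> A k - P k"
    proof
      assume "wstar \<in> A k - P k"
      hence "wstar \<in> A j - P j" using persist[OF kj jl] by simp
      thus False using ws by simp
    qed
  qed
  have fwd: "\<And>k. k \<le> j \<Longrightarrow> \<forall>i\<in>A k. i \<noteq> wstar \<longrightarrow> (None, Some i) \<in> E'\<^sup>*"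
  proof -
    fix k assume "k \<le> j" thus "\<forall>i\<in>A k. i \<noteq> wstar \<longrightarrow> (None, Some i) \<in> E'\<^sup>*"
    proof (induction k)
      case 0
      show ?case
      proof (intro ballI impI)
        fix i assume "i \<in> A 0" "i \<noteq> wstar"
        hence "(None, Some i) \<in> E'" using A0 by (simp add: E'_def E_def profile_edges_def)
        thus "(None, Some i) \<in> E'\<^sup>*" by (rule r_into_rtrancl)
      qed
    next
      case (Suc k)
      have kj: "k \<le> j" using Suc.prems by simp
      have IH: "\<forall>i\<in>A k. i \<noteq> wstar \<longrightarrow> (None, Some i) \<in> E'\<^sup>*" using Suc.IH[OF kj] .
      have sk: "Suc k < length ss" using Suc.prems jl assms(8) by simp
      have kl: "k < length ss" using sk by simp
      from step_cases[OF sk] show ?case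
      proof (elim disjE exE conjE)
        fix x assume x: "x \<in> W k \<union> (A k - P k)" "A (Suc k) = A k \<union> r x" "W (Suc k) = W k"
        have "wstar \<notin> W j" using ws by simp
        moreover have "W k \<subseteq> W j" using mono[OF kj jl] by simp
        ultimately have "wstar \<notin> W k" by auto
        moreover have "wstar \<notin> A k - P k" using not_exh[OF kj] .
        ultimately have xw: "x \<noteq> wstar" using x(1) by auto
        have iv: "A k \<subseteq> B" "W k \<subseteq> A k" using inv[OF kl] by auto
        have xA: "x \<in> A k" using x(1) iv(2) by auto
        have xB: "x \<in> B" using xA iv(1) by auto
        have rx: "(None, Some x) \<in> E'\<^sup>*" using IH xA xw by simp
        show ?case
        proof (intro ballI impI)
          fix i assume i: "i \<in> A (Suc k)" "i \<noteq> wstar"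
          show "(None, Some i) \<in> E'\<^sup>*"
          proof (cases "i \<in> A k")
            case True thus ?thesis using IH i(2) by simp
          next
            case False
            hence "i \<in> r x" using i(1) x(2) by simp
            hence "(Some x, Some i) \<in> E'" using xB xw i(2)
              by (simp add: E'_def E_def profile_edges_def)
            with rx show ?thesis by (rule rtrancl_into_rtrancl)
          qed
        qed
      next
        fix w assume "A (Suc k) = A k"
        thus ?case using IH by simp
      qed
    qed
  qed
  define F where "F = length ss - 1"
  have lastF: "last ss = ss ! F" using ne by (simp add: last_conv_nth F_def)
  have jF: "Suc j \<le> F" "F < length ss" using assms(8) by (auto simp: F_def)
  have Wconst: "\<And>l. Suc j \<le> l \<Longrightarrow> l < length ss \<Longrightarrow> W l = insert wstar (W j)"
  proof -
    fix l assume "Suc j \<le> l" "l < length ss" thus "W l = insert wstar (W j)"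
    proof (induction l)
      case 0 thus ?case by simp
    next
      case (Suc l)
      show ?case
      proof (cases "Suc j = Suc l")
        case True thus ?thesis using selj by simp
      next
        case False
        have jl1: "Suc j \<le> l" using False Suc.prems(1) by simp
        have ll: "l < length ss" using Suc.prems(2) by simp
        have IH: "W l = insert wstar (W j)" using Suc.IH[OF jl1 ll] .
        have jl': "j < l" using jl1 by simp
        have "mudan_step m v r \<sigma> (ss!l) (ss!Suc l)" using steps[OF Suc.prems(2)] .
        moreover have "\<not> select_step m v r \<sigma> (ss ! l) (ss ! Suc l) w" for w
          using last_sel jl' Suc.prems(2) by simp
        ultimately have "closure_step m v r (ss!l) (ss!Suc l)" by (auto simp: mudan_step_def)
        hence "W (Suc l) = W l" by (auto simp: closure_step_def W_def)
        thus ?thesis using IH by simp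
      qed
    qed
  qed
  have WF: "W F = insert wstar (W j)" using Wconst[OF jF] .
  have AjF: "A j \<subseteq> A F" using mono[of j F] jF by simp
  have termF': "closed_state m v r (A F) (W F)" "P F - W F = {}"
    using termF lastF by (auto simp: terminal_state_def A_def W_def P_def)
  have finj: "finite (A j)" "W j \<subseteq> A j" using fin[OF jl] inv[OF jl] by auto
  have finW: "finite (W j)" using finj by (meson finite_subset)
  have finF: "finite (A F)" using fin[OF jF(2)] .
  define k' where "k' = m - card (W j)"
  have k1: "k' \<ge> 1"
  proof (cases "card (A j - W j) \<le> k'")
    case True
    have "wstar \<in> A j - W j" using ws potential_sub[OF finj(2), of m v] by (auto simp: P_def)
    hence "card (A j - W j) \<ge> 1" using finj by (metis One_nat_def Suc_leI card_gt_0_iff empty_iff finite_Diff)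
    thus ?thesis using True by simp
  next
    case False
    hence "wstar \<in> top_k v k' (A j - W j)" using ws by (auto simp: P_def potential_def k'_def)
    thus ?thesis by (auto simp: top_k_def)
  qed
  have key: "\<And>x. x \<in> A j \<Longrightarrow> x \<noteq> wstar \<Longrightarrow> r x \<subseteq> A j"
  proof -
    fix x assume xA: "x \<in> A j" and xw: "x \<noteq> wstar"
    show "r x \<subseteq> A j"
    proof (cases "x \<in> W j \<union> (A j - P j)")
      case True thus ?thesis using selj(1) by (auto simp: closed_state_def P_def)
    next
      case False
      hence xP: "x \<in> P j - W j" using xA by simp
      show ?thesis
      proof (cases "k' = 1")
        case True
        show ?thesis
        proof (cases "card (A j - W j) \<le> k'")
          case True
          have "{x, wstar} \<subseteq> A j - W j" using xP ws potential_sub[OF finj(2), of m v]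
            by (auto simp: P_def)
          hence "card {x, wstar} \<le> card (A j - W j)" using finj by (intro card_mono) auto
          thus ?thesis using True \<open>k' = 1\<close> xw by simp
        next
          case False
          hence "x \<in> top_k v 1 (A j - W j)" "wstar \<in> top_k v 1 (A j - W j)"
            using xP ws \<open>k' = 1\<close> by (auto simp: P_def potential_def k'_def)
          hence "x = wstar" using top1_unique[of "A j - W j"] finj(1) by simp
          thus ?thesis using xw by simp
        qed
      next
        case False
        have wsW: "wstar \<notin> W j" using ws by simp
        have cWF: "m - card (W F) = k' - 1" using WF finW wsW k'_def by simp
        have k2: "k' - 1 > 0" using False k1 by simp
        have xF: "x \<in> A F - W F" using xA AjF WF xw xP by auto
        show ?thesis
        proof (cases "card (A F - W F) \<le> m - card (W F)")
          case True
          hence "P F = A F" by (simp add: P_def potential_def)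
          hence False using xF termF'(2) by auto
          thus ?thesis ..
        next
          case False
          hence PF: "P F = W F \<union> top_k v (k' - 1) (A F - W F)"
            using cWF by (simp add: P_def potential_def)
          have "top_k v (k' - 1) (A F - W F) \<noteq> {}"
            using top_nonempty[of "A F - W F" "k' - 1" v] finF xF k2 by auto
          then obtain t where t: "t \<in> top_k v (k' - 1) (A F - W F)" by auto
          have "t \<in> A F - W F" using t top_sub[of v "k' - 1" "A F - W F"] by auto
          hence "t \<in> P F - W F" using PF t by auto
          hence False using termF'(2) by auto
          thus ?thesis ..
        qed
      qed
    qed
  qed
  have bwd: "\<And>a b. (a, b) \<in> E'\<^sup>* \<Longrightarrow> a = None \<Longrightarrow> b = None \<or> (\<exists>y. b = Some y \<and> y \<in> A j)"
  proof -
    fix a b assume "(a, b) \<in> E'\<^sup>*" "a = None"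
    thus "b = None \<or> (\<exists>y. b = Some y \<and> y \<in> A j)"
    proof (induction rule: rtrancl_induct)
      case base thus ?case by simp
    next
      case (step y z)
      have yz: "(y, z) \<in> E" "y \<noteq> Some wstar" "z \<noteq> Some wstar" using step(2) by (auto simp: E'_def)
      from yz(1) consider (s) u where "y = None" "z = Some u" "u \<in> rs"
        | (b) x u where "y = Some x" "z = Some u" "x \<in> B" "u \<in> r x"
        by (auto simp: E_def profile_edges_def)
      thus ?case
      proof cases
        case s
        have "A 0 \<subseteq> A j" using mono[of 0 j] jl by simp
        thus ?thesis using s A0 by auto
      next
        case b
        have "x \<in> A j" using step(3)[OF step(4)] b by simp
        moreover have "x \<noteq> wstar" using yz b by simp
        ultimately have "u \<in> A j" using key b(4) by auto
        thus ?thesis using b by simp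
      qed
    qed
  qed
  show ?thesis
  proof (intro ballI impI)
    fix i assume "i \<in> B" "i \<noteq> wstar"
    show "i \<in> fst (ss ! j) \<longleftrightarrow> reach_avoiding (profile_edges B rs r) wstar i"
      unfolding reach_iff A_def[symmetric]
      using fwd[of j] bwd[of None "Some i"] \<open>i \<noteq> wstar\<close> by auto
  qed
qed

end
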